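(* For any values of $k$, $\mu$, and $\nu$, \[ \,_{2}F_{3}\left(\tfrac{1}{2},\tfrac{\mu}{2}+\tfrac{\nu}{2}+\tfrac{1}{2};\mu+1,\nu+1,\mu+\nu+1;-k^{2}\right) =\frac{2^{\mu+\nu}\Gamma(\mu+1)\Gamma(\nu+1)\Gamma\left(\frac{\mu}{2}+\frac{\nu}{2}+1\right)}{\sqrt{\pi}\,\Gamma\left(\frac{\mu}{2}+\frac{\nu}{2}\right)^{2}\Gamma\left(\frac{\mu}{2}+\frac{\nu}{2}+\frac{1}{2}\right)} \sum_{L=0}^{\infty}\frac{(-1)^{2L}k^{4L}2^{4L-2\left(\frac{\mu}{2}+\frac{\nu}{2}\right)-\mu-\nu+1}\left(\left(\frac{\mu}{2}+\frac{\nu}{2}+\frac{1}{2}\right)_{2L}\right)^{2}\Gamma(2L+\mu+\nu)}{(2L)!\left(L+\frac{1}{2}\right)_{\mu+\frac{1}{2}}\left(L+\frac{1}{2}\right)_{\nu+\frac{1}{2}}\left(2L+\frac{\mu}{2}+\frac{\nu}{2}\right)\left((\mu+\nu)_{2L}\right)^{2}\left((2L+\mu+\nu)_{2L}\right)^{2}} \,_{1}F_{2}\left(L+\tfrac{1}{2};L+\mu+1,2L+\tfrac{\mu}{2}+\tfrac{\nu}{2}+1;-\tfrac{k^{2}}{4}\right)\,_{1}F_{2}\left(L+\tfrac{1}{2};2L+\tfrac{\mu}{2}+\tfrac{\nu}{2}+1,L+\nu+1;-\tfrac{k^{2}}{4}\right). \]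
   Context: $\,_{p}F_{q}(a_1,\dots,a_p;b_1,\dots,b_q;z)=\sum_{n\ge0}\frac{(a_1)_n\cdots(a_p)_n}{(b_1)_n\cdots(b_q)_n}\frac{z^n}{n!}$ is the generalized hypergeometric function. $(c)_g=\Gamma(c+g)/\Gamma(c)$ denotes the Pochhammer symbol (for arbitrary $g$). *)

theory Defs
  imports "HOL-Analysis.Analysis"
begin

definition hypergeomF :: "real list \<Rightarrow> real list \<Rightarrow> real \<Rightarrow> real" where
  "hypergeomF as bs z =
     (\<Sum>n. (\<Prod>a\<leftarrow>as. pochhammer a n) / (\<Prod>b\<leftarrow>bs. pochhammer b n) * z ^ n / fact n)"

definition gpoch :: "real \<Rightarrow> real \<Rightarrow> real" where
  "gpoch c g = Gamma (c + g) / Gamma c"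

end

theory Submission
  imports Defs "HOL-Computational_Algebra.Formal_Power_Series"
begin

lemma wz_poly:
  fixes s i j L :: real
  shows "(2 * L+s) * (2 * j+1) * (j+1) * (s+1+i+j) - (2 * i+2 * j+1) * (2 * L+s) * (j+1-L) * (s+1+L+j)
     = -((s+L) * (2 * s+2 * L+1) * (L-i) * (L-j-1)) + L * (2 * L-1) * (L+i+s) * (s+1+L+j)"
  by (simp add: algebra_simps)

lemma wz_rat:
  fixes s i j L :: real
  assumes "j \<ge> 0" "s+1+i+j \<noteq> 0" "s+1+L+j \<noteq> 0"
  shows "(2 * L+s)/((j+1) * (s+1+L+j)) - (2 * i+2 * j+1)/((j+1) * (s+1+i+j) * (2 * j+1)) * ((2 * L+s) * (j+1-L)/(j+1))
    = -((s+L) * (2 * s+2 * L+1) * (L-i) * (L-j-1))/((2 * j+1) * (j+1)^2 * (s+1+i+j) * (s+1+L+j))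
      + L * (2 * L-1) * (L+i+s)/((2 * j+1) * (j+1)^2 * (s+1+i+j))"
proof -
  have h: "2 * j+1 \<noteq> 0" "j+1 \<noteq> 0" using assms by auto
  define D where "D = (2 * j+1) * (j+1)^2 * (s+1+i+j) * (s+1+L+j)"
  have D: "D \<noteq> 0" using h assms by (simp add: D_def)
  have e: "\<And>a b c d::real. a * D - b * D = c * D + d * D \<Longrightarrow> a - b = c + d"
    using D by (metis distrib_right left_diff_distrib mult_right_cancel)
  have 1: "(2 * L+s)/((j+1) * (s+1+L+j)) * D = (2 * L+s) * (2 * j+1) * (j+1) * (s+1+i+j)"
    unfolding D_def using h assms by (simp add: power2_eq_square)
  have 2: "(2 * i+2 * j+1)/((j+1) * (s+1+i+j) * (2 * j+1)) * ((2 * L+s) * (j+1-L)/(j+1)) * D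
     = (2 * i+2 * j+1) * (2 * L+s) * (j+1-L) * (s+1+L+j)"
    unfolding D_def using h assms by (simp add: power2_eq_square)
  have 3: "-((s+L) * (2 * s+2 * L+1) * (L-i) * (L-j-1))/((2 * j+1) * (j+1)^2 * (s+1+i+j) * (s+1+L+j)) * D
     = -((s+L) * (2 * s+2 * L+1) * (L-i) * (L-j-1))"
    unfolding D_def using h assms by (simp add: power2_eq_square)
  have 4: "L * (2 * L-1) * (L+i+s)/((2 * j+1) * (j+1)^2 * (s+1+i+j)) * D = L * (2 * L-1) * (L+i+s) * (s+1+L+j)"
    unfolding D_def using h assms by (simp add: power2_eq_square)
  show ?thesis by (rule e) (simp only: 1 2 3 4 wz_poly)
qed

definition tA :: "real \<Rightarrow> nat \<Rightarrow> nat \<Rightarrow> nat \<Rightarrow> real" where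
  "tA s i j L = pochhammer (2 * s) (2 * L) * (2 * real L + s) * pochhammer (- real i) L * pochhammer (- real j) L
     / (s * fact (2 * L) * fact i * fact j * pochhammer (s + 1) (L + i) * pochhammer (s + 1) (L + j))"

definition CA :: "real \<Rightarrow> nat \<Rightarrow> nat \<Rightarrow> nat \<Rightarrow> real" where
  "CA s i j L = pochhammer (2 * s) (2 * L) * pochhammer (- real i) L * pochhammer (- real j - 1) L
     / (s * fact (2 * L) * fact i * fact j * pochhammer (s + 1) (L + i) * pochhammer (s + 1) (L + j))"

definition hA :: "real \<Rightarrow> nat \<Rightarrow> nat \<Rightarrow> nat \<Rightarrow> real" where
  "hA s i j L = CA s i j L * (- (real L * (2 * real L - 1) * (real L + real i + s))
     / ((2 * real j + 1) * (real j + 1)^2 * (s + 1 + real i + real j)))"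

definition rhoA :: "real \<Rightarrow> nat \<Rightarrow> nat \<Rightarrow> real" where
  "rhoA s i j = (2 * real i + 2 * real j + 1) / ((real j + 1) * (s + 1 + real i + real j) * (2 * real j + 1))"

lemma poch_nz: assumes "\<forall>n::nat. s \<noteq> - real n" shows "pochhammer (s + 1) k \<noteq> 0"
proof
  assume "pochhammer (s + 1) k = 0"
  then obtain m where "s + 1 = - real m" by (auto simp: pochhammer_eq_0_iff)
  then have "s = - real (Suc m)" by simp
  with assms show False by blast
qed

lemma wz_step:
  fixes s :: real
  assumes s: "\<forall>n::nat. s \<noteq> - real n"
  shows "tA s i (Suc j) L - rhoA s i j * tA s i j L = hA s i j (Suc L) - hA s i j L"
proof -
  define P where "P = pochhammer (2 * s) (2 * L)"
  define Q where "Q = pochhammer (- real i) L"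
  define A where "A = pochhammer (- real j - 1) L"
  define Bi where "Bi = pochhammer (s + 1) (L + i)"
  define Bj where "Bj = pochhammer (s + 1) (L + j)"
  define f where "f = (fact (2 * L) :: real)"
  define fi where "fi = (fact i :: real)"
  define fj where "fj = (fact j :: real)"
  define C where "C = P * Q * A / (s * f * fi * fj * Bi * Bj)"
  have s0: "s \<noteq> 0" using s[rule_format, of 0] by simp
  have sk: "s + 1 + real k \<noteq> 0" for k
  proof -
    have "s \<noteq> - real (Suc k)" using s by blast
    then show ?thesis by simp
  qed
  have nz: "Bi \<noteq> 0" "Bj \<noteq> 0" "f \<noteq> 0" "fi \<noteq> 0" "fj \<noteq> 0"
    using poch_nz[OF s] by (auto simp: Bi_def Bj_def f_def fi_def fj_def)
  have sij: "s + 1 + real i + real j \<noteq> 0" using sk[of "i+j"] by (simp add: add.assoc)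
  have sLj: "s + 1 + real L + real j \<noteq> 0" using sk[of "L+j"] by (simp add: add.assoc)
  have sLi: "s + 1 + real L + real i \<noteq> 0" using sk[of "L+i"] by (simp add: add.assoc)
  have Lp: "2 * real L + 1 \<noteq> 0" "2 * real L + 2 \<noteq> 0" by linarith+
  have jp: "real j + 1 \<noteq> 0" "2 * real j + 1 \<noteq> 0" by linarith+
  have Aj: "pochhammer (- real j) L = A * (real j + 1 - real L) / (real j + 1)"
  proof -
    have "pochhammer (- real j - 1) (Suc L) = (- real j - 1) * pochhammer (- real j) L"
      by (simp add: pochhammer_rec)
    moreover have "pochhammer (- real j - 1) (Suc L) = (- real j - 1 + real L) * A"
      by (simp add: pochhammer_rec' A_def)
    ultimately have "(- real j - 1) * pochhammer (- real j) L = (- real j - 1 + real L) * A" by simp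
    then show ?thesis using jp by (simp add: field_simps)
  qed
  have e1: "tA s i (Suc j) L = C * ((2 * real L + s) / ((real j + 1) * (s + 1 + real L + real j)))"
  proof -
    have a: "pochhammer (- real (Suc j)) L = A" unfolding A_def
      by (rule arg_cong[where f="\<lambda>x. pochhammer x L"]) simp
    have b: "pochhammer (s + 1) (L + Suc j) = Bj * (s + 1 + real L + real j)"
      by (simp add: Bj_def pochhammer_rec' algebra_simps)
    show ?thesis unfolding tA_def a b fact_Suc C_def P_def Q_def Bi_def f_def fi_def fj_def
      by (simp add: times_divide_times_eq mult_ac)
  qed
  have CAL: "CA s i j L = C" unfolding CA_def C_def P_def Q_def A_def Bi_def Bj_def f_def fi_def fj_def ..
  have e2: "tA s i j L = C * ((2 * real L + s) * (real j + 1 - real L) / (real j + 1))"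
    unfolding tA_def Aj
    unfolding C_def P_def[symmetric] Q_def[symmetric] Bi_def[symmetric] Bj_def[symmetric]
       f_def[symmetric] fi_def[symmetric] fj_def[symmetric]
    using nz s0 jp by (simp add: field_simps)
  have e4: "hA s i j L = C * (- (real L * (2 * real L - 1) * (real L + real i + s))
      / ((2 * real j + 1) * (real j + 1)^2 * (s + 1 + real i + real j)))"
    unfolding hA_def CAL ..
  have x1: "pochhammer (2 * s) (2 * Suc L) = P * (2 * s + 2 * real L) * (2 * s + 2 * real L + 1)"
    by (simp add: P_def pochhammer_rec' algebra_simps)
  have x2: "pochhammer (- real i) (Suc L) = Q * (real L - real i)"
    by (simp add: Q_def pochhammer_rec' algebra_simps)
  have x3: "pochhammer (- real j - 1) (Suc L) = A * (real L - real j - 1)"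
    by (simp add: A_def pochhammer_rec' algebra_simps)
  have x4: "(fact (2 * Suc L) :: real) = f * (2 * real L + 1) * (2 * real L + 2)"
    by (simp add: f_def algebra_simps)
  have x5: "pochhammer (s + 1) (Suc L + i) = Bi * (s + 1 + real L + real i)"
    by (simp add: Bi_def pochhammer_rec' algebra_simps)
  have x6: "pochhammer (s + 1) (Suc L + j) = Bj * (s + 1 + real L + real j)"
    by (simp add: Bj_def pochhammer_rec' algebra_simps)
  have CAS: "CA s i j (Suc L) = C * ((2 * s + 2 * real L) * (2 * s + 2 * real L + 1) * (real L - real i) * (real L - real j - 1)
       / ((2 * real L + 1) * (2 * real L + 2) * (s + 1 + real L + real i) * (s + 1 + real L + real j)))"
    unfolding CA_def x1 x2 x3 x4 x5 x6 C_def fi_def[symmetric] fj_def[symmetric]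
    by (simp add: times_divide_times_eq mult_ac)
  have r3: "((2 * s + 2 * real L) * (2 * s + 2 * real L + 1) * (real L - real i) * (real L - real j - 1)
       / ((2 * real L + 1) * (2 * real L + 2) * (s + 1 + real L + real i) * (s + 1 + real L + real j)))
     * (- (real (Suc L) * (2 * real (Suc L) - 1) * (real (Suc L) + real i + s))
     / ((2 * real j + 1) * (real j + 1)^2 * (s + 1 + real i + real j)))
     = - ((s + real L) * (2 * s + 2 * real L + 1) * (real L - real i) * (real L - real j - 1))
      / ((2 * real j + 1) * (real j + 1)^2 * (s + 1 + real i + real j) * (s + 1 + real L + real j))"
  proof -
    have ab: "\<And>x y u v w z a b d :: real. w \<noteq> 0 \<Longrightarrow> z \<noteq> 0 \<Longrightarrow> a \<noteq> 0 \<Longrightarrow> b \<noteq> 0 \<Longrightarrow> d \<noteq> 0 \<Longrightarrow>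
      (2 * x * y * u * v) / (w * (2 * z) * a * b) * (- (z * w * a) / d) = - (x * y * u * v) / (d * b)"
      by (simp add: field_simps)
    have q1: "2 * s + 2 * real L = 2 * (s + real L)" by simp
    have q2: "2 * real L + 2 = 2 * (real L + 1)" by simp
    have q3: "real (Suc L) = real L + 1" by simp
    have q4: "2 * (real L + 1) - 1 = 2 * real L + 1" by simp
    have q5: "real L + 1 + real i + s = s + 1 + real L + real i" by simp
    have dn: "(2 * real j + 1) * (real j + 1)^2 * (s + 1 + real i + real j) \<noteq> 0" using jp sij by simp
    show ?thesis unfolding q1 q2 q3 q4 q5
      by (rule ab) (use Lp sLi sLj dn in auto)
  qed
  have e3: "hA s i j (Suc L) = C * (- ((s + real L) * (2 * s + 2 * real L + 1) * (real L - real i) * (real L - real j - 1))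
      / ((2 * real j + 1) * (real j + 1)^2 * (s + 1 + real i + real j) * (s + 1 + real L + real j)))"
    unfolding hA_def CAS r3[symmetric] by (simp only: mult.assoc)
  have gen: "\<And>C a r b h1 h0 k::real. a - r * b = h1 + k \<Longrightarrow> h0 = - k \<Longrightarrow> C * a - r * (C * b) = C * h1 - C * h0"
  proof -
    fix C a r b h1 h0 k :: real
    assume H: "a - r * b = h1 + k" "h0 = - k"
    have "C * a - r * (C * b) = C * (a - r * b)" by (simp add: algebra_simps)
    also have "\<dots> = C * (h1 + k)" by (simp only: H(1))
    finally show "C * a - r * (C * b) = C * h1 - C * h0" by (simp add: H(2) algebra_simps)
  qed
  show ?thesis
    unfolding e1 e2 e3 e4 rhoA_def
  proof (rule gen)
    show "(2 * real L + s) / ((real j + 1) * (s + 1 + real L + real j)) -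
      (2 * real i + 2 * real j + 1) / ((real j + 1) * (s + 1 + real i + real j) * (2 * real j + 1)) *
      ((2 * real L + s) * (real j + 1 - real L) / (real j + 1)) =
      - ((s + real L) * (2 * s + 2 * real L + 1) * (real L - real i) * (real L - real j - 1))
      / ((2 * real j + 1) * (real j + 1)^2 * (s + 1 + real i + real j) * (s + 1 + real L + real j))
      + real L * (2 * real L - 1) * (real L + real i + s) / ((2 * real j + 1) * (real j + 1)^2 * (s + 1 + real i + real j))"
      by (rule wz_rat) (use sij sLj in auto)
  qed simp
qed

definition RA :: "real \<Rightarrow> nat \<Rightarrow> nat \<Rightarrow> real" where
  "RA s i j = pochhammer (1/2) (i + j) / (fact i * fact j * pochhammer (s + 1) (i + j) * pochhammer (1/2) i * pochhammer (1/2) j)"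

lemma half_poch_nz: "pochhammer (1/2::real) n \<noteq> 0"
proof
  assume "pochhammer (1/2::real) n = 0"
  then obtain k where "(1/2::real) = - real k" by (auto simp: pochhammer_eq_0_iff)
  then show False using of_nat_0_le_iff[of k] by linarith
qed

lemma RA_step:
  assumes s: "\<forall>n::nat. s \<noteq> - real n"
  shows "RA s i (Suc j) = rhoA s i j * RA s i j"
proof -
  have sk: "s + 1 + real i + real j \<noteq> 0"
  proof -
    have "s \<noteq> - real (Suc (i + j))" using s by blast
    then show ?thesis by simp
  qed
  have p1: "pochhammer (1/2::real) (i + Suc j) = pochhammer (1/2) (i + j) * (1/2 + real i + real j)"
    by (simp add: pochhammer_rec' algebra_simps)
  have p2: "pochhammer (1/2::real) (Suc j) = pochhammer (1/2) j * (1/2 + real j)"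
    by (simp add: pochhammer_rec' algebra_simps)
  have p3: "pochhammer (s + 1) (i + Suc j) = pochhammer (s + 1) (i + j) * (s + 1 + real i + real j)"
    by (simp add: pochhammer_rec' algebra_simps)
  have nz: "pochhammer (1/2::real) (i + j) \<noteq> 0" "pochhammer (1/2::real) i \<noteq> 0" "pochhammer (1/2::real) j \<noteq> 0"
     "pochhammer (s + 1) (i + j) \<noteq> 0" using half_poch_nz poch_nz[OF s] by auto
  have p4: "(fact (Suc j) :: real) = (real j + 1) * fact j" by simp
  have ab: "\<And>X a F G m B b H K c :: real. F \<noteq> 0 \<Longrightarrow> G \<noteq> 0 \<Longrightarrow> m \<noteq> 0 \<Longrightarrow> B \<noteq> 0 \<Longrightarrow> b \<noteq> 0
     \<Longrightarrow> H \<noteq> 0 \<Longrightarrow> K \<noteq> 0 \<Longrightarrow> c \<noteq> 0 \<Longrightarrow>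
     X * a / (F * (m * G) * (B * b) * H * (K * c)) = (2 * a) / (m * b * (2 * c)) * (X / (F * G * B * H * K))"
    by (simp add: field_simps)
  have q1: "2 * real i + 2 * real j + 1 = 2 * (1/2 + real i + real j)" by simp
  have q2: "2 * real j + 1 = 2 * (1/2 + real j)" by simp
  show ?thesis unfolding RA_def rhoA_def p1 p2 p3 p4 q1 q2
    by (rule ab) (use nz sk in \<open>auto simp: add_nonneg_eq_0_iff\<close>)
qed

lemma sumA:
  assumes s: "\<forall>n::nat. s \<noteq> - real n"
  shows "(\<Sum>L\<le>i. tA s i j L) = RA s i j"
proof (induction j)
  case 0
  have s0: "s \<noteq> 0" using s[rule_format, of 0] by simp
  have t0: "tA s i 0 L = (if L = 0 then 1 / (fact i * pochhammer (s + 1) i) else 0)" for L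
    using s0 by (auto simp: tA_def pochhammer_0_left)
  have "(\<Sum>L\<le>i. tA s i 0 L) = 1 / (fact i * pochhammer (s + 1) i)"
    unfolding t0 by simp
  also have "\<dots> = RA s i 0" unfolding RA_def using half_poch_nz[of i] by simp
  finally show ?case .
next
  case (Suc j)
  have "(\<Sum>L\<le>i. tA s i (Suc j) L) = (\<Sum>L\<le>i. rhoA s i j * tA s i j L + (hA s i j (Suc L) - hA s i j L))"
    by (rule sum.cong) (use wz_step[OF s] in \<open>auto simp: algebra_simps\<close>)
  also have "\<dots> = rhoA s i j * (\<Sum>L\<le>i. tA s i j L) + (hA s i j (Suc i) - hA s i j 0)"
    by (simp only: sum.distrib sum_distrib_left lessThan_Suc_atMost[symmetric] sum_lessThan_telescope)
  also have "hA s i j (Suc i) = 0"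
    by (simp add: hA_def CA_def pochhammer_of_nat_eq_0_iff)
  also have "hA s i j 0 = 0" by (simp add: hA_def)
  finally show ?case using Suc.IH RA_step[OF s] by simp
qed

lemma sumB:
  fixes \<mu> \<nu> :: real
  assumes m: "pochhammer (\<mu> + 1) N \<noteq> 0" and n: "pochhammer (\<nu> + 1) N \<noteq> 0"
  shows "(\<Sum>i\<le>N. 1 / (fact i * fact (N - i) * pochhammer (\<mu> + 1) i * pochhammer (\<nu> + 1) (N - i)))
     = pochhammer (\<mu> + \<nu> + real N + 1) N / (fact N * pochhammer (\<mu> + 1) N * pochhammer (\<nu> + 1) N)"
proof -
  define X where "X = \<mu> + real N"
  define Y where "Y = \<nu> + real N"
  have key: "1 / (fact i * fact (N - i) * pochhammer (\<mu> + 1) i * pochhammer (\<nu> + 1) (N - i))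
     = ((Y gchoose i) * (X gchoose (N - i))) / (pochhammer (\<mu> + 1) N * pochhammer (\<nu> + 1) N)"
    if i: "i \<le> N" for i
  proof -
    have pm: "pochhammer (\<mu> + 1) N = pochhammer (\<mu> + 1) i * pochhammer (\<mu> + 1 + real i) (N - i)"
      using pochhammer_product[OF i, of "\<mu> + 1"] by simp
    have pn: "pochhammer (\<nu> + 1) N = pochhammer (\<nu> + 1) (N - i) * pochhammer (\<nu> + 1 + real (N - i)) i"
      using pochhammer_product[of "N - i" N "\<nu> + 1"] i by simp
    have gx: "X gchoose (N - i) = pochhammer (\<mu> + 1 + real i) (N - i) / fact (N - i)"
      unfolding gbinomial_pochhammer' X_def using i by (simp add: of_nat_diff algebra_simps)
    have gy: "Y gchoose i = pochhammer (\<nu> + 1 + real (N - i)) i / fact i"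
      unfolding gbinomial_pochhammer' Y_def using i by (simp add: of_nat_diff algebra_simps)
    have nz: "pochhammer (\<mu> + 1) i \<noteq> 0" "pochhammer (\<mu> + 1 + real i) (N - i) \<noteq> 0"
       "pochhammer (\<nu> + 1) (N - i) \<noteq> 0" "pochhammer (\<nu> + 1 + real (N - i)) i \<noteq> 0"
      using m n unfolding pm pn by auto
    show ?thesis unfolding pm pn gx gy using nz by (simp add: field_simps)
  qed
  have "(\<Sum>i\<le>N. 1 / (fact i * fact (N - i) * pochhammer (\<mu> + 1) i * pochhammer (\<nu> + 1) (N - i)))
      = (\<Sum>i\<le>N. ((Y gchoose i) * (X gchoose (N - i))) / (pochhammer (\<mu> + 1) N * pochhammer (\<nu> + 1) N))"
    by (rule sum.cong) (auto simp: key)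
  also have "\<dots> = (\<Sum>i=0..N. (Y gchoose i) * (X gchoose (N - i))) / (pochhammer (\<mu> + 1) N * pochhammer (\<nu> + 1) N)"
    by (simp add: sum_divide_distrib atMost_atLeast0)
  also have "\<dots> = ((Y + X) gchoose N) / (pochhammer (\<mu> + 1) N * pochhammer (\<nu> + 1) N)"
    by (simp only: gbinomial_Vandermonde)
  also have "(Y + X) gchoose N = pochhammer (\<mu> + \<nu> + real N + 1) N / fact N"
    unfolding gbinomial_pochhammer' X_def Y_def by (simp add: algebra_simps)
  finally show ?thesis by simp
qed

lemma poch_upper: "\<bar>pochhammer (a::real) n\<bar> \<le> (\<bar>a\<bar> + 1) ^ n * fact n"
proof (induction n)
  case 0 then show ?case by simp
next
  case (Suc n)
  have h: "\<bar>a + real n\<bar> \<le> (\<bar>a\<bar> + 1) * (real n + 1)"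
  proof -
    have "\<bar>a + real n\<bar> \<le> \<bar>a\<bar> + real n" by simp
    also have "\<dots> \<le> (\<bar>a\<bar> + 1) * (real n + 1)" by (simp add: algebra_simps)
    finally show ?thesis .
  qed
  have "\<bar>pochhammer a (Suc n)\<bar> = \<bar>a + real n\<bar> * \<bar>pochhammer a n\<bar>"
    by (simp add: pochhammer_rec' abs_mult)
  also have "\<dots> \<le> ((\<bar>a\<bar> + 1) * (real n + 1)) * ((\<bar>a\<bar> + 1) ^ n * fact n)"
    by (rule mult_mono[OF h Suc.IH]) auto
  also have "\<dots> = (\<bar>a\<bar> + 1) ^ Suc n * fact (Suc n)" by (simp add: algebra_simps)
  finally show ?case .
qed

lemma poch_lower:
  fixes a :: real
  assumes a: "\<forall>k::nat. a \<noteq> - real k"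
  shows "\<exists>C>0. \<forall>n. C * fact n / 2 ^ n \<le> \<bar>pochhammer a n\<bar>"
proof -
  define K where "K = nat \<lceil>2 * \<bar>a\<bar>\<rceil> + 1"
  have K: "real n \<ge> 2 * \<bar>a\<bar> + 1" if "n \<ge> K" for n
  proof -
    have "real K \<ge> 2 * \<bar>a\<bar> + 1" unfolding K_def by linarith
    then show ?thesis using that by linarith
  qed
  have pnz: "pochhammer a n \<noteq> 0" for n
    using a by (auto simp: pochhammer_eq_0_iff)
  define C where "C = Min ((\<lambda>n. \<bar>pochhammer a n\<bar> * 2 ^ n / fact n) ` {..K})"
  have Cpos: "C > 0" unfolding C_def using pnz by (subst Min_gr_iff) auto
  have Cle: "C \<le> \<bar>pochhammer a n\<bar> * 2 ^ n / fact n" if "n \<le> K" for n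
    unfolding C_def using that by (intro Min_le) auto
  have "C * fact n / 2 ^ n \<le> \<bar>pochhammer a n\<bar>" for n
  proof (induction n)
    case 0 then show ?case using Cle[of 0] by simp
  next
    case (Suc n)
    show ?case
    proof (cases "Suc n \<le> K")
      case True
      have aux: "\<And>C X t f::real. 0 < f \<Longrightarrow> 0 < t \<Longrightarrow> C \<le> X * t / f \<Longrightarrow> C * f / t \<le> X"
        by (simp add: field_simps)
      show ?thesis by (rule aux[OF _ _ Cle[OF True]]) auto
    next
      case False
      then have "n \<ge> K" by simp
      then have "2 * \<bar>a\<bar> + 1 \<le> real n" using K by blast
      then have h00: "real n + 1 \<le> 2 * a + 2 * real n" using abs_ge_minus_self[of a] by linarith
      then have h0: "(real n + 1) / 2 \<le> a + real n" by simp
      have h: "(real n + 1) / 2 \<le> \<bar>a + real n\<bar>" using h0 abs_ge_self[of "a + real n"] by linarith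
      have "C * fact (Suc n) / 2 ^ Suc n = ((real n + 1) / 2) * (C * fact n / 2 ^ n)"
        by (simp add: field_simps)
      also have "\<dots> \<le> \<bar>a + real n\<bar> * \<bar>pochhammer a n\<bar>"
        by (rule mult_mono[OF h Suc.IH]) (use Cpos in auto)
      also have "\<dots> = \<bar>pochhammer a (Suc n)\<bar>" by (simp add: pochhammer_rec' abs_mult)
      finally show ?thesis .
    qed
  qed
  with Cpos show ?thesis by blast
qed

lemma summable_F12:
  fixes a b1 b2 z :: real
  assumes b1: "\<forall>k::nat. b1 \<noteq> - real k" and b2: "\<forall>k::nat. b2 \<noteq> - real k"
  shows "summable (\<lambda>n. \<bar>pochhammer a n / (pochhammer b1 n * pochhammer b2 n) * z ^ n / fact n\<bar>)"
proof -
  obtain C1 where C1: "C1 > 0" "\<And>n. C1 * fact n / 2 ^ n \<le> \<bar>pochhammer b1 n\<bar>" using poch_lower[OF b1] by blast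
  obtain C2 where C2: "C2 > 0" "\<And>n. C2 * fact n / 2 ^ n \<le> \<bar>pochhammer b2 n\<bar>" using poch_lower[OF b2] by blast
  define w where "w = 4 * (\<bar>a\<bar> + 1) * \<bar>z\<bar>"
  have bound: "norm \<bar>pochhammer a n / (pochhammer b1 n * pochhammer b2 n) * z ^ n / fact n\<bar>
      \<le> (1 / (C1 * C2)) * (w ^ n / fact n)" for n
  proof -
    have d: "(C1 * fact n / 2 ^ n) * (C2 * fact n / 2 ^ n) \<le> \<bar>pochhammer b1 n\<bar> * \<bar>pochhammer b2 n\<bar>"
      by (rule mult_mono[OF C1(2) C2(2)]) (use C1 C2 in auto)
    have dpos: "0 < (C1 * fact n / 2 ^ n) * (C2 * fact n / 2 ^ n)" using C1 C2 by simp
    have "norm \<bar>pochhammer a n / (pochhammer b1 n * pochhammer b2 n) * z ^ n / fact n\<bar>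
        = \<bar>pochhammer a n\<bar> * \<bar>z\<bar> ^ n / fact n / (\<bar>pochhammer b1 n\<bar> * \<bar>pochhammer b2 n\<bar>)"
      by (simp add: abs_mult power_abs)
    also have "\<dots> \<le> ((\<bar>a\<bar> + 1) ^ n * fact n) * \<bar>z\<bar> ^ n / fact n / ((C1 * fact n / 2 ^ n) * (C2 * fact n / 2 ^ n))"
      by (intro divide_mono mult_right_mono poch_upper d dpos) auto
    also have "\<dots> = (1 / (C1 * C2)) * (w ^ n / fact n) / fact n"
    proof -
      have w: "w ^ n = 2 ^ n * 2 ^ n * (\<bar>a\<bar> + 1) ^ n * \<bar>z\<bar> ^ n"
        unfolding w_def by (simp add: power_mult_distrib[symmetric])
      show ?thesis unfolding w using C1 C2 by (simp add: field_simps)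
    qed
    also have "\<dots> \<le> (1 / (C1 * C2)) * (w ^ n / fact n) / 1"
      by (rule divide_left_mono) (use C1 C2 in \<open>auto simp: w_def\<close>)
    finally show ?thesis by simp
  qed
  have e: "summable (\<lambda>n. w ^ n / fact n)" using summable_exp[of w] by (simp add: divide_inverse mult.commute)
  show ?thesis
    by (rule summable_comparison_test'[OF summable_mult[OF e] bound])
qed

lemma Gamma_dup_real:
  fixes z :: real
  assumes "z \<notin> \<int>\<^sub>\<le>\<^sub>0" "z + 1/2 \<notin> \<int>\<^sub>\<le>\<^sub>0"
  shows "Gamma z * Gamma (z + 1/2) = 2 powr (1 - 2 * z) * sqrt pi * Gamma (2 * z)"
proof -
  have a1: "complex_of_real z \<notin> \<int>\<^sub>\<le>\<^sub>0" using assms(1) by (simp add: of_real_in_nonpos_Ints_iff)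
  have a2: "complex_of_real z + 1/2 \<notin> \<int>\<^sub>\<le>\<^sub>0"
  proof -
    have "complex_of_real z + 1/2 = complex_of_real (z + 1/2)" by simp
    then show ?thesis using assms(2) by (simp only: of_real_in_nonpos_Ints_iff not_False_eq_True)
  qed
  define cz where "cz = complex_of_real z"
  have dup: "Gamma cz * Gamma (cz + 1/2) =
        exp ((1 - 2 * cz) * of_real (ln 2)) * of_real (sqrt pi) * Gamma (2 * cz)"
    unfolding cz_def by (rule Gamma_legendre_duplication[OF a1 a2])
  have l: "complex_of_real (Gamma z * Gamma (z + 1/2)) = Gamma cz * Gamma (cz + 1/2)"
  proof -
    have "cz + 1/2 = complex_of_real (z + 1/2)" unfolding cz_def by simp
    then show ?thesis unfolding cz_def by (simp only: of_real_mult Gamma_complex_of_real)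
  qed
  have r1: "exp ((1 - 2 * cz) * of_real (ln 2)) = complex_of_real (exp ((1 - 2 * z) * ln 2))"
  proof -
    have "(1 - 2 * cz) * of_real (ln 2) = complex_of_real ((1 - 2 * z) * ln 2)" unfolding cz_def by simp
    then show ?thesis by (simp only: exp_of_real)
  qed
  have r2: "Gamma (2 * cz) = complex_of_real (Gamma (2 * z))"
  proof -
    have "2 * cz = complex_of_real (2 * z)" unfolding cz_def by simp
    then show ?thesis by (simp only: Gamma_complex_of_real)
  qed
  have "complex_of_real (Gamma z * Gamma (z + 1/2)) = complex_of_real (exp ((1 - 2 * z) * ln 2) * sqrt pi * Gamma (2 * z))"
    unfolding l dup r1 r2 by (simp only: of_real_mult)
  then have "Gamma z * Gamma (z + 1/2) = exp ((1 - 2 * z) * ln 2) * sqrt pi * Gamma (2 * z)"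
    by (simp only: of_real_eq_iff)
  then show ?thesis by (simp add: powr_def)
qed

lemma notin_nonpos_nat: "(x::real) \<notin> \<int>\<^sub>\<le>\<^sub>0 \<Longrightarrow> \<forall>k::nat. x \<noteq> - real k"
  by auto

lemma PW:
  fixes \<mu> \<nu> :: real
  assumes h1: "\<mu> + 1 \<notin> \<int>\<^sub>\<le>\<^sub>0" and h2: "\<nu> + 1 \<notin> \<int>\<^sub>\<le>\<^sub>0" and h3: "\<mu> + \<nu> \<notin> \<int>\<^sub>\<le>\<^sub>0"
  shows "(2 powr (\<mu> + \<nu>) * Gamma (\<mu> + 1) * Gamma (\<nu> + 1) * Gamma (\<mu>/2 + \<nu>/2 + 1))
      / (sqrt pi * Gamma (\<mu>/2 + \<nu>/2) ^ 2 * Gamma (\<mu>/2 + \<nu>/2 + 1/2))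
   * ((2 powr (4 * real L - 2 * (\<mu>/2 + \<nu>/2) - \<mu> - \<nu> + 1) * (pochhammer (\<mu>/2 + \<nu>/2 + 1/2) (2 * L)) ^ 2
        * Gamma (2 * real L + \<mu> + \<nu>))
      / (fact (2 * L) * gpoch (real L + 1/2) (\<mu> + 1/2) * gpoch (real L + 1/2) (\<nu> + 1/2)
        * (2 * real L + \<mu>/2 + \<nu>/2) * (pochhammer (\<mu> + \<nu>) (2 * L)) ^ 2
        * (pochhammer (2 * real L + \<mu> + \<nu>) (2 * L)) ^ 2))
   = (\<mu>/2 + \<nu>/2) * pochhammer (\<mu> + \<nu>) (2 * L) * pochhammer (1/2) L ^ 2
      / (16 ^ L * fact (2 * L) * pochhammer (\<mu> + 1) L * pochhammer (\<nu> + 1) L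
         * (2 * real L + \<mu>/2 + \<nu>/2) * pochhammer (\<mu>/2 + \<nu>/2) (2 * L) ^ 2)"
proof -
  define s where "s = \<mu>/2 + \<nu>/2"
  have sh: "\<mu> + \<nu> = 2 * s" unfolding s_def by simp
  have s_np: "s \<notin> \<int>\<^sub>\<le>\<^sub>0"
  proof
    assume "s \<in> \<int>\<^sub>\<le>\<^sub>0"
    then obtain n where "s = - real n" by (auto elim!: nonpos_Ints_cases')
    then have "\<mu> + \<nu> = - real (2 * n)" using sh by simp
    then show False using h3 minus_of_nat_in_nonpos_Ints by metis
  qed
  have sh_np: "s + 1/2 \<notin> \<int>\<^sub>\<le>\<^sub>0"
  proof
    assume "s + 1/2 \<in> \<int>\<^sub>\<le>\<^sub>0"
    then obtain n where "s + 1/2 = - real n" by (auto elim!: nonpos_Ints_cases')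
    then have "\<mu> + \<nu> = - real (2 * n + 1)" using sh by simp
    then show False using h3 minus_of_nat_in_nonpos_Ints by metis
  qed
  have half_np: "(1/2::real) \<notin> \<int>\<^sub>\<le>\<^sub>0"
  proof
    assume "(1/2::real) \<in> \<int>\<^sub>\<le>\<^sub>0"
    then show False by auto
  qed
  define E where "E = (2::real) powr (\<mu> + \<nu>)"
  have Epos: "E > 0" unfolding E_def by simp
  define F where "F = (16::real) ^ L"
  have Fpos: "F > 0" unfolding F_def by simp
  define sp where "sp = sqrt pi"
  have sppos: "sp > 0" unfolding sp_def by simp
  define Gm where "Gm = Gamma (\<mu> + 1)"
  define Gn where "Gn = Gamma (\<nu> + 1)"
  define Gs where "Gs = Gamma s"
  define Gh where "Gh = Gamma (s + 1/2)"
  define P2 where "P2 = pochhammer (\<mu> + \<nu>) (2 * L)"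
  define Ps where "Ps = pochhammer s (2 * L)"
  define Psh where "Psh = pochhammer (s + 1/2) (2 * L)"
  define Pm where "Pm = pochhammer (\<mu> + 1) L"
  define Pn where "Pn = pochhammer (\<nu> + 1) L"
  define Ph where "Ph = pochhammer (1/2::real) L"
  define f where "f = (fact (2 * L) :: real)"
  define q where "q = 2 * real L + \<mu>/2 + \<nu>/2"
  have nz: "Gm \<noteq> 0" "Gn \<noteq> 0" "Gs \<noteq> 0" "Gh \<noteq> 0" "f \<noteq> 0"
    using h1 h2 s_np sh_np by (auto simp: Gm_def Gn_def Gs_def Gh_def f_def Gamma_eq_zero_iff)
  have nzp: "P2 \<noteq> 0" "Ps \<noteq> 0" "Psh \<noteq> 0" "Pm \<noteq> 0" "Pn \<noteq> 0" "Ph \<noteq> 0"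
    using h1 h2 h3 s_np sh_np half_np
    by (auto simp: P2_def Ps_def Psh_def Pm_def Pn_def Ph_def pochhammer_eq_0_iff)
  have qnz: "q \<noteq> 0"
  proof
    assume "q = 0"
    then have "\<mu> + \<nu> = - real (4 * L)" unfolding q_def by simp
    then show False using h3 minus_of_nat_in_nonpos_Ints by metis
  qed
  have pw: "2 powr (4 * real L - 2 * (\<mu>/2 + \<nu>/2) - \<mu> - \<nu> + 1) = F * 2 / E ^ 2"
  proof -
    have "2 powr (4 * real L - 2 * (\<mu>/2 + \<nu>/2) - \<mu> - \<nu> + 1) * E ^ 2
        = 2 powr (4 * real L - 2 * (\<mu>/2 + \<nu>/2) - \<mu> - \<nu> + 1 + (\<mu> + \<nu>) + (\<mu> + \<nu>))"
      unfolding E_def power2_eq_square by (simp only: powr_add mult.assoc)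
    also have "4 * real L - 2 * (\<mu>/2 + \<nu>/2) - \<mu> - \<nu> + 1 + (\<mu> + \<nu>) + (\<mu> + \<nu>) = real (4 * L + 1)"
      by simp
    also have "(2::real) powr real (4 * L + 1) = 2 ^ (4 * L + 1)"
      by (rule powr_realpow) simp
    also have "(2::real) ^ (4 * L + 1) = F * 2"
      unfolding F_def by (simp add: power_mult power_add)
    finally show ?thesis using Epos by (simp add: field_simps)
  qed
  have g1: "Gamma (2 * real L + \<mu> + \<nu>) = Gamma (\<mu> + \<nu>) * P2"
  proof -
    have "P2 = Gamma (\<mu> + \<nu> + real (2 * L)) / Gamma (\<mu> + \<nu>)"
      unfolding P2_def by (rule pochhammer_Gamma[OF h3])
    moreover have "Gamma (\<mu> + \<nu>) \<noteq> 0" using h3 by (simp add: Gamma_eq_zero_iff)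
    moreover have "\<mu> + \<nu> + real (2 * L) = 2 * real L + \<mu> + \<nu>" by simp
    ultimately show ?thesis by (simp add: field_simps)
  qed
  have g2: "Gamma (\<mu> + \<nu>) = Gs * Gh * (E / 2) / sp"
  proof -
    have d: "Gs * Gh = 2 powr (1 - 2 * s) * sp * Gamma (2 * s)"
      unfolding Gs_def Gh_def sp_def by (rule Gamma_dup_real[OF s_np sh_np])
    have e: "2 powr (1 - 2 * s) * E = 2"
      unfolding E_def sh by (simp add: powr_add[symmetric])
    show ?thesis using d e sppos Epos unfolding sh by (simp add: field_simps)
  qed
  have gh: "Gamma (real L + 1/2) = sp * Ph"
  proof -
    have "Ph = Gamma (1/2 + real L) / Gamma (1/2)"
      unfolding Ph_def by (rule pochhammer_Gamma[OF half_np])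
    then show ?thesis using Gamma_one_half_real sppos unfolding sp_def by (simp add: field_simps add.commute)
  qed
  have gp1: "gpoch (real L + 1/2) (\<mu> + 1/2) = Gm * Pm / (sp * Ph)"
  proof -
    have "Pm = Gamma (\<mu> + 1 + real L) / Gm"
      unfolding Pm_def Gm_def by (rule pochhammer_Gamma[OF h1])
    then have g: "Gamma (\<mu> + 1 + real L) = Gm * Pm" using nz by (simp add: field_simps)
    have arg: "Gamma (real L + 1/2 + (\<mu> + 1/2)) = Gamma (\<mu> + 1 + real L)"
      by (rule arg_cong[where f=Gamma]) simp
    show ?thesis unfolding gpoch_def gh arg g using nz nzp sppos by (simp add: field_simps)
  qed
  have gp2: "gpoch (real L + 1/2) (\<nu> + 1/2) = Gn * Pn / (sp * Ph)"
  proof -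
    have "Pn = Gamma (\<nu> + 1 + real L) / Gn"
      unfolding Pn_def Gn_def by (rule pochhammer_Gamma[OF h2])
    then have g: "Gamma (\<nu> + 1 + real L) = Gn * Pn" using nz by (simp add: field_simps)
    have arg: "Gamma (real L + 1/2 + (\<nu> + 1/2)) = Gamma (\<nu> + 1 + real L)"
      by (rule arg_cong[where f=Gamma]) simp
    show ?thesis unfolding gpoch_def gh arg g using nz nzp sppos by (simp add: field_simps)
  qed
  have gs1: "Gamma (\<mu>/2 + \<nu>/2 + 1) = s * Gs"
    unfolding s_def[symmetric] Gs_def by (rule Gamma_plus1[OF s_np])
  have T: "pochhammer (2 * real L + \<mu> + \<nu>) (2 * L) = F * Ps * Psh / P2"
  proof -
    have a: "pochhammer (\<mu> + \<nu>) (2 * L + 2 * L) = P2 * pochhammer (\<mu> + \<nu> + real (2 * L)) (2 * L)"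
      unfolding P2_def by (rule pochhammer_product')
    have b: "pochhammer (2 * s) (2 * (2 * L)) = of_nat (2 ^ (2 * (2 * L))) * Ps * Psh"
      unfolding Ps_def Psh_def by (rule pochhammer_double)
    have c: "(of_nat (2 ^ (2 * (2 * L))) :: real) = F" unfolding F_def by (simp add: power_mult)
    have d: "\<mu> + \<nu> + real (2 * L) = 2 * real L + \<mu> + \<nu>" by simp
    have e: "2 * L + 2 * L = 2 * (2 * L)" by simp
    from a b c d e show ?thesis using nzp unfolding sh by (simp add: field_simps)
  qed
  show ?thesis
    unfolding pw g1 gp1 gp2 gs1 T
    unfolding s_def[symmetric]
    unfolding g2
    unfolding E_def[symmetric] sp_def[symmetric] Gm_def[symmetric] Gn_def[symmetric] Gs_def[symmetric]
      Gh_def[symmetric] P2_def[symmetric] Ps_def[symmetric] Psh_def[symmetric] Pm_def[symmetric]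
      Pn_def[symmetric] Ph_def[symmetric] f_def[symmetric] F_def[symmetric]
    unfolding q_def[symmetric]
    using nz nzp qnz Epos Fpos sppos by (simp add: field_simps power2_eq_square)
qed

definition ccf :: "real \<Rightarrow> real \<Rightarrow> real \<Rightarrow> nat \<Rightarrow> nat \<Rightarrow> nat \<Rightarrow> real" where
  "ccf s \<mu> \<nu> L m n =
     (pochhammer (2 * s) (2 * L) / fact (2 * L)) * ((2 * real L + s) / s)
     * (pochhammer (1/2) (L + m) / pochhammer (\<mu> + 1) (L + m))
     * (pochhammer (1/2) (L + n) / pochhammer (\<nu> + 1) (L + n))
     * (1 / pochhammer (s + 1) (2 * L + m)) * (1 / pochhammer (s + 1) (2 * L + n))
     * (1 / (4 ^ (2 * L + m + n) * fact m * fact n))"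

lemma neg_poch_fact:
  assumes "L \<le> i"
  shows "pochhammer (- real i) L * fact (i - L) = (-1) ^ L * (fact i :: real)"
proof -
  have a: "pochhammer (- real i) L = (-1) ^ L * pochhammer (real i - real L + 1) L"
    by (rule pochhammer_minus)
  have b: "(fact i :: real) = pochhammer 1 (i - L) * pochhammer (1 + real (i - L)) L"
    using pochhammer_product[of "i - L" i "1::real"] assms by (simp add: pochhammer_fact)
  have c: "1 + real (i - L) = real i - real L + 1" using assms by (simp add: of_nat_diff)
  show ?thesis unfolding a b c by (simp add: pochhammer_fact)
qed

lemma term_id:
  fixes \<mu> \<nu> x :: real
  assumes h1: "\<mu> + 1 \<notin> \<int>\<^sub>\<le>\<^sub>0" and h2: "\<nu> + 1 \<notin> \<int>\<^sub>\<le>\<^sub>0" and h3: "\<mu> + \<nu> \<notin> \<int>\<^sub>\<le>\<^sub>0"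
  shows "((\<mu>/2 + \<nu>/2) * pochhammer (\<mu> + \<nu>) (2 * L) * pochhammer (1/2) L ^ 2
      / (16 ^ L * fact (2 * L) * pochhammer (\<mu> + 1) L * pochhammer (\<nu> + 1) L
         * (2 * real L + \<mu>/2 + \<nu>/2) * pochhammer (\<mu>/2 + \<nu>/2) (2 * L) ^ 2) * x ^ (2 * L))
    * (pochhammer (real L + 1/2) m / (pochhammer (real L + \<mu> + 1) m * pochhammer (2 * real L + \<mu>/2 + \<nu>/2 + 1) m)
        * (x / 4) ^ m / fact m)
    * (pochhammer (real L + 1/2) n / (pochhammer (2 * real L + \<mu>/2 + \<nu>/2 + 1) n * pochhammer (real L + \<nu> + 1) n)
        * (x / 4) ^ n / fact n)
   = ccf (\<mu>/2 + \<nu>/2) \<mu> \<nu> L m n * x ^ (2 * L + m + n)"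
proof -
  define s where "s = \<mu>/2 + \<nu>/2"
  have sh: "\<mu> + \<nu> = 2 * s" unfolding s_def by simp
  have s_nat: "\<forall>k::nat. s \<noteq> - real k"
  proof
    fix k :: nat show "s \<noteq> - real k"
    proof
      assume "s = - real k"
      then have "\<mu> + \<nu> = - real (2 * k)" using sh by simp
      then show False using h3 minus_of_nat_in_nonpos_Ints by metis
    qed
  qed
  have s0: "s \<noteq> 0" using s_nat[rule_format, of 0] by simp
  have m_nat: "\<forall>k::nat. \<mu> + 1 \<noteq> - real k" using h1 by auto
  have n_nat: "\<forall>k::nat. \<nu> + 1 \<noteq> - real k" using h2 by auto
  have q0: "2 * real L + s \<noteq> 0"
  proof
    assume "2 * real L + s = 0"
    then have "s = - real (2 * L)" by simp
    then show False using s_nat by blast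
  qed
  define P2 where "P2 = pochhammer (2 * s) (2 * L)"
  define Ps where "Ps = pochhammer s (2 * L)"
  define Pm where "Pm = pochhammer (\<mu> + 1) L"
  define Pn where "Pn = pochhammer (\<nu> + 1) L"
  define Ph where "Ph = pochhammer (1/2::real) L"
  define Qh1 where "Qh1 = pochhammer (real L + 1/2) m"
  define Qh2 where "Qh2 = pochhammer (real L + 1/2) n"
  define Qm where "Qm = pochhammer (real L + \<mu> + 1) m"
  define Qn where "Qn = pochhammer (real L + \<nu> + 1) n"
  define Q1 where "Q1 = pochhammer (2 * real L + s + 1) m"
  define Q2 where "Q2 = pochhammer (2 * real L + s + 1) n"
  define f where "f = (fact (2 * L) :: real)"
  define fm where "fm = (fact m :: real)"
  define fn where "fn = (fact n :: real)"
  have r1: "pochhammer (1/2) (L + m) = Ph * Qh1"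
    unfolding Ph_def Qh1_def pochhammer_product' by (simp add: add.commute)
  have r2: "pochhammer (1/2) (L + n) = Ph * Qh2"
    unfolding Ph_def Qh2_def pochhammer_product' by (simp add: add.commute)
  have r3: "pochhammer (\<mu> + 1) (L + m) = Pm * Qm"
    unfolding Pm_def Qm_def pochhammer_product' by (simp add: algebra_simps)
  have r4: "pochhammer (\<nu> + 1) (L + n) = Pn * Qn"
    unfolding Pn_def Qn_def pochhammer_product' by (simp add: algebra_simps)
  have r5: "pochhammer (s + 1) (2 * L + k) = Ps * (2 * real L + s) * pochhammer (2 * real L + s + 1) k / s" for k
  proof -
    have "pochhammer s (Suc (2 * L + k)) = s * pochhammer (s + 1) (2 * L + k)" by (rule pochhammer_rec)
    moreover have "pochhammer s (2 * L + Suc k) = Ps * pochhammer (s + real (2 * L)) (Suc k)"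
      unfolding Ps_def by (rule pochhammer_product')
    moreover have "pochhammer (s + real (2 * L)) (Suc k) = (2 * real L + s) * pochhammer (2 * real L + s + 1) k"
      by (simp add: pochhammer_rec algebra_simps)
    ultimately show ?thesis using s0 by (simp add: field_simps)
  qed
  have r6: "pochhammer (2 * real L + \<mu>/2 + \<nu>/2 + 1) = pochhammer (2 * real L + s + 1)"
    unfolding s_def by (simp add: algebra_simps)
  have nz: "Ps \<noteq> 0" "Pm \<noteq> 0" "Pn \<noteq> 0" "Ph \<noteq> 0" "Qm \<noteq> 0" "Qn \<noteq> 0" "Q1 \<noteq> 0" "Q2 \<noteq> 0"
    "f \<noteq> 0" "fm \<noteq> 0" "fn \<noteq> 0" "Qh1 \<noteq> 0" "Qh2 \<noteq> 0"
  proof -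
    have "pochhammer (s + 1) (2 * L + m) \<noteq> 0" "pochhammer (s + 1) (2 * L + n) \<noteq> 0"
      using poch_nz[OF s_nat] by auto
    then show "Ps \<noteq> 0" "Q1 \<noteq> 0" "Q2 \<noteq> 0" unfolding r5 Q1_def Q2_def by auto
    have "pochhammer (\<mu> + 1) (L + m) \<noteq> 0" "pochhammer (\<nu> + 1) (L + n) \<noteq> 0"
      using m_nat n_nat by (auto simp: pochhammer_eq_0_iff)
    then show "Pm \<noteq> 0" "Pn \<noteq> 0" "Qm \<noteq> 0" "Qn \<noteq> 0" unfolding r3 r4 by auto
    have "pochhammer (1/2::real) (L + m) \<noteq> 0" "pochhammer (1/2::real) (L + n) \<noteq> 0"
      using half_poch_nz by auto
    then show "Ph \<noteq> 0" "Qh1 \<noteq> 0" "Qh2 \<noteq> 0" unfolding r1 r2 by auto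
  qed (auto simp: f_def fm_def fn_def)
  have pw: "x ^ (2 * L + m + n) = x ^ (2 * L) * x ^ m * x ^ n" by (simp add: power_add)
  have p4: "(4::real) ^ (2 * L + m + n) = 16 ^ L * 4 ^ m * 4 ^ n" by (simp add: power_add power_mult)
  have qq: "2 * real L + \<mu>/2 + \<nu>/2 = 2 * real L + s" unfolding s_def by simp
  define q where "q = 2 * real L + s"
  show ?thesis
    unfolding ccf_def r6 qq s_def[symmetric] sh
    unfolding r1 r2 r3 r4 r5 pw p4
    unfolding P2_def[symmetric] Ps_def[symmetric] Pm_def[symmetric] Pn_def[symmetric] Ph_def[symmetric]
      Qh1_def[symmetric] Qh2_def[symmetric] Qm_def[symmetric] Qn_def[symmetric] Q1_def[symmetric]
      Q2_def[symmetric] f_def[symmetric] fm_def[symmetric] fn_def[symmetric] q_def[symmetric]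
    using nz s0 q0[folded q_def] by (simp add: field_simps power2_eq_square power_divide)
qed


lemma negpoch_prod:
  assumes "L \<le> i" "L \<le> j"
  shows "pochhammer (- real i) L * pochhammer (- real j) L = fact i * fact j / (fact (i - L) * fact (j - L))"
proof -
  have a: "pochhammer (- real i) L * fact (i - L) = (-1) ^ L * (fact i :: real)" by (rule neg_poch_fact[OF assms(1)])
  have b: "pochhammer (- real j) L * fact (j - L) = (-1) ^ L * (fact j :: real)" by (rule neg_poch_fact[OF assms(2)])
  have sg: "(-1::real) ^ L * (-1) ^ L = 1" by (simp add: power_mult_distrib[symmetric])
  have "pochhammer (- real i) L * pochhammer (- real j) L * (fact (i - L) * fact (j - L))
      = (pochhammer (- real i) L * fact (i - L)) * (pochhammer (- real j) L * fact (j - L))"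
    by (simp only: ac_simps)
  also have "\<dots> = ((-1) ^ L * (-1) ^ L) * (fact i * fact j)" unfolding a b by (simp only: ac_simps)
  also have "\<dots> = fact i * fact j" unfolding sg by simp
  finally show ?thesis by (simp add: field_simps)
qed

lemma cc_tA:
  fixes s \<mu> \<nu> :: real
  assumes "L \<le> i" "L \<le> j" and s_nat: "\<forall>k::nat. s \<noteq> - real k"
    and m_nat: "\<forall>k::nat. \<mu> + 1 \<noteq> - real k" and n_nat: "\<forall>k::nat. \<nu> + 1 \<noteq> - real k"
  shows "ccf s \<mu> \<nu> L (i - L) (j - L) =
    pochhammer (1/2) i * pochhammer (1/2) j / (4 ^ (i + j) * pochhammer (\<mu> + 1) i * pochhammer (\<nu> + 1) j) * tA s i j L"
proof -
  have e1: "L + (i - L) = i" "L + (j - L) = j" "2 * L + (i - L) = L + i" "2 * L + (j - L) = L + j"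
     "2 * L + (i - L) + (j - L) = i + j" "L + i + (j - L) = i + j" using assms by auto
  have t: "tA s i j L = pochhammer (2 * s) (2 * L) * (2 * real L + s) * (pochhammer (- real i) L * pochhammer (- real j) L)
     / (s * fact (2 * L) * fact i * fact j * pochhammer (s + 1) (L + i) * pochhammer (s + 1) (L + j))"
    unfolding tA_def by (simp only: mult.assoc)
  have fi: "(fact i :: real) \<noteq> 0" "(fact j :: real) \<noteq> 0" by auto
  have s0: "s \<noteq> 0" using s_nat[rule_format, of 0] by simp
  have nz: "pochhammer (s + 1) (L + i) \<noteq> 0" "pochhammer (s + 1) (L + j) \<noteq> 0"
    "pochhammer (\<mu> + 1) i \<noteq> 0" "pochhammer (\<nu> + 1) j \<noteq> 0"
    using poch_nz[OF s_nat] m_nat n_nat by (auto simp: pochhammer_eq_0_iff)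
  show ?thesis unfolding ccf_def e1 t negpoch_prod[OF assms(1,2)] using fi s0 nz
    by (simp add: field_simps)
qed

lemma fiber_sum:
  fixes \<mu> \<nu> :: real
  assumes h1: "\<mu> + 1 \<notin> \<int>\<^sub>\<le>\<^sub>0" and h2: "\<nu> + 1 \<notin> \<int>\<^sub>\<le>\<^sub>0" and h3: "\<mu> + \<nu> \<notin> \<int>\<^sub>\<le>\<^sub>0"
  shows "(\<Sum>p\<in>{p::nat\<times>nat\<times>nat. 2 * fst p + fst (snd p) + snd (snd p) = N}.
            ccf (\<mu>/2 + \<nu>/2) \<mu> \<nu> (fst p) (fst (snd p)) (snd (snd p)))
     = pochhammer (1/2) N * pochhammer (\<mu>/2 + \<nu>/2 + 1/2) N
        / (pochhammer (\<mu> + 1) N * pochhammer (\<nu> + 1) N * pochhammer (\<mu> + \<nu> + 1) N) / fact N"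
proof -
  define s where "s = \<mu>/2 + \<nu>/2"
  have sh: "\<mu> + \<nu> = 2 * s" unfolding s_def by simp
  have s_nat: "\<forall>k::nat. s \<noteq> - real k"
  proof
    fix k :: nat show "s \<noteq> - real k"
    proof
      assume "s = - real k"
      then have "\<mu> + \<nu> = - real (2 * k)" using sh by simp
      then show False using h3 minus_of_nat_in_nonpos_Ints by metis
    qed
  qed
  have m_nat: "\<forall>k::nat. \<mu> + 1 \<noteq> - real k" using h1 by auto
  have n_nat: "\<forall>k::nat. \<nu> + 1 \<noteq> - real k" using h2 by auto
  have mn_nat: "\<forall>k::nat. \<mu> + \<nu> + 1 \<noteq> - real k"
  proof
    fix k :: nat show "\<mu> + \<nu> + 1 \<noteq> - real k"
    proof
      assume "\<mu> + \<nu> + 1 = - real k"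
      then have "\<mu> + \<nu> = - real (Suc k)" by simp
      then show False using h3 minus_of_nat_in_nonpos_Ints by metis
    qed
  qed
  define K where "K = pochhammer (1/2) N / (4 ^ N * pochhammer (s + 1) N)"
  define g where "g = (\<lambda>p::nat\<times>nat\<times>nat. ccf s \<mu> \<nu> (fst p) (fst (snd p)) (snd (snd p)))"
  have S1: "sum g {p::nat\<times>nat\<times>nat. 2 * fst p + fst (snd p) + snd (snd p) = N}
      = sum (\<lambda>(a, L). ccf s \<mu> \<nu> L (a - L) (N - a - L)) (SIGMA a:{..N}. {..min a (N - a)})"
    by (rule sum.reindex_bij_witness[where j = "\<lambda>p. (fst p + fst (snd p), fst p)"
          and i = "\<lambda>(a, L). (L, a - L, N - a - L)"]) (auto simp: g_def)
  also have "\<dots> = (\<Sum>a\<le>N. \<Sum>L\<le>min a (N - a). ccf s \<mu> \<nu> L (a - L) (N - a - L))"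
    by (rule sum.Sigma[symmetric]) auto
  also have "\<dots> = (\<Sum>a\<le>N. K * (1 / (fact a * fact (N - a) * pochhammer (\<mu> + 1) a * pochhammer (\<nu> + 1) (N - a))))"
  proof (rule sum.cong[OF refl])
    fix a assume "a \<in> {..N}"
    then have aN: "a \<le> N" by simp
    define j where "j = N - a"
    have aj: "a + j = N" using aN unfolding j_def by simp
    define coef where "coef = pochhammer (1/2) a * pochhammer (1/2) j / (4 ^ (a + j) * pochhammer (\<mu> + 1) a * pochhammer (\<nu> + 1) j)"
    have "(\<Sum>L\<le>min a (N - a). ccf s \<mu> \<nu> L (a - L) (N - a - L)) = (\<Sum>L\<le>min a j. coef * tA s a j L)"
    proof (rule sum.cong)
      fix L assume "L \<in> {..min a j}"
      then have "L \<le> a" "L \<le> j" by auto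
      moreover have "N - a - L = j - L" unfolding j_def ..
      ultimately show "ccf s \<mu> \<nu> L (a - L) (N - a - L) = coef * tA s a j L"
        unfolding coef_def using cc_tA[OF _ _ s_nat m_nat n_nat] by simp
    qed (simp add: j_def)
    also have "\<dots> = (\<Sum>L\<le>a. coef * tA s a j L)"
    proof (rule sum.mono_neutral_left)
      show "\<forall>L\<in>{..a} - {..min a j}. coef * tA s a j L = 0"
      proof
        fix L assume "L \<in> {..a} - {..min a j}"
        then have "L > j" by auto
        then have "pochhammer (- real j) L = 0" by (simp add: pochhammer_of_nat_eq_0_iff)
        then show "coef * tA s a j L = 0" by (simp add: tA_def)
      qed
    qed auto
    also have "\<dots> = coef * RA s a j" by (simp add: sum_distrib_left[symmetric] sumA[OF s_nat])
    also have "\<dots> = K * (1 / (fact a * fact j * pochhammer (\<mu> + 1) a * pochhammer (\<nu> + 1) j))"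
    proof -
      have nz: "pochhammer (1/2::real) a \<noteq> 0" "pochhammer (1/2::real) j \<noteq> 0"
        "pochhammer (s + 1) N \<noteq> 0" "pochhammer (\<mu> + 1) a \<noteq> 0" "pochhammer (\<nu> + 1) j \<noteq> 0"
        using half_poch_nz poch_nz[OF s_nat] m_nat n_nat by (auto simp: pochhammer_eq_0_iff)
      show ?thesis unfolding coef_def RA_def K_def aj using nz by (simp add: field_simps)
    qed
    finally show "(\<Sum>L\<le>min a (N - a). ccf s \<mu> \<nu> L (a - L) (N - a - L)) =
      K * (1 / (fact a * fact (N - a) * pochhammer (\<mu> + 1) a * pochhammer (\<nu> + 1) (N - a)))"
      unfolding j_def .
  qed
  also have "\<dots> = K * (pochhammer (\<mu> + \<nu> + real N + 1) N / (fact N * pochhammer (\<mu> + 1) N * pochhammer (\<nu> + 1) N))"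
  proof -
    have z: "pochhammer (\<mu> + 1) N \<noteq> 0" "pochhammer (\<nu> + 1) N \<noteq> 0"
      using m_nat n_nat by (auto simp: pochhammer_eq_0_iff)
    show ?thesis unfolding sum_distrib_left[symmetric] sumB[OF z] ..
  qed
  also have "\<dots> = pochhammer (1/2) N * pochhammer (\<mu>/2 + \<nu>/2 + 1/2) N
        / (pochhammer (\<mu> + 1) N * pochhammer (\<nu> + 1) N * pochhammer (\<mu> + \<nu> + 1) N) / fact N"
  proof -
    have a: "pochhammer (\<mu> + \<nu> + 1) (2 * N) = pochhammer (\<mu> + \<nu> + 1) N * pochhammer (\<mu> + \<nu> + real N + 1) N"
      using pochhammer_product'[of "\<mu> + \<nu> + 1" N N] by (simp add: mult_2 add_ac)
    have b0: "pochhammer (2 * (s + 1/2)) (2 * N) = of_nat (2 ^ (2 * N)) * pochhammer (s + 1/2) N * pochhammer (s + 1/2 + 1/2) N"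
      by (rule pochhammer_double)
    have c1: "2 * (s + 1/2) = \<mu> + \<nu> + 1" unfolding s_def by simp
    have c2: "s + 1/2 + 1/2 = s + 1" by simp
    have c3: "(of_nat (2 ^ (2 * N)) :: real) = 4 ^ N" by (simp add: power_mult)
    have b: "pochhammer (\<mu> + \<nu> + 1) (2 * N) = 4 ^ N * pochhammer (s + 1/2) N * pochhammer (s + 1) N"
      using b0 unfolding c1 c2 c3 .
    have X: "pochhammer (\<mu> + \<nu> + real N + 1) N = 4 ^ N * pochhammer (s + 1/2) N * pochhammer (s + 1) N / pochhammer (\<mu> + \<nu> + 1) N"
    proof -
      have "pochhammer (\<mu> + \<nu> + 1) N \<noteq> 0" using mn_nat by (auto simp: pochhammer_eq_0_iff)
      then show ?thesis using a b by (simp add: field_simps)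
    qed
    have nz: "pochhammer (s + 1) N \<noteq> 0" "pochhammer (\<mu> + \<nu> + 1) N \<noteq> 0"
      "pochhammer (\<mu> + 1) N \<noteq> 0" "pochhammer (\<nu> + 1) N \<noteq> 0"
      using poch_nz[OF s_nat] mn_nat m_nat n_nat by (auto simp: pochhammer_eq_0_iff)
    show ?thesis unfolding X K_def s_def[symmetric] using nz by (simp add: field_simps)
  qed
  finally show ?thesis unfolding g_def s_def .
qed

lemma two_L_le: "2 * real L + 1 \<le> 4 ^ L"
proof (induction L)
  case 0 then show ?case by simp
next
  case (Suc L)
  have "2 * real (Suc L) + 1 = (2 * real L + 1) + 2" by simp
  also have "\<dots> \<le> 4 ^ L + 2" using Suc.IH by simp
  also have "\<dots> \<le> 4 ^ Suc L"
  proof -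
    have h: "(1::real) \<le> 4 ^ L" by simp
    show ?thesis by (simp only: power_Suc) (use h in linarith)
  qed
  finally show ?case .
qed

lemma ccf_bound:
  fixes s \<mu> \<nu> x :: real
  assumes s_nat: "\<forall>k::nat. s \<noteq> - real k"
    and m_nat: "\<forall>k::nat. \<mu> + 1 \<noteq> - real k" and n_nat: "\<forall>k::nat. \<nu> + 1 \<noteq> - real k"
  shows "\<exists>K A B. \<forall>L m n. \<bar>ccf s \<mu> \<nu> L m n * x ^ (2 * L + m + n)\<bar> \<le> K * (A ^ L / fact L) * (B ^ m / fact m) * (B ^ n / fact n)"
proof -
  have s1_nat: "\<forall>k::nat. s + 1 \<noteq> - real k"
  proof
    fix k :: nat
    have "s \<noteq> - real (Suc k)" using s_nat by blast
    then show "s + 1 \<noteq> - real k" by simp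
  qed
  obtain Cm where Cm: "Cm > 0" "\<And>k. Cm * fact k / 2 ^ k \<le> \<bar>pochhammer (\<mu> + 1) k\<bar>" using poch_lower[OF m_nat] by blast
  obtain Cn where Cn: "Cn > 0" "\<And>k. Cn * fact k / 2 ^ k \<le> \<bar>pochhammer (\<nu> + 1) k\<bar>" using poch_lower[OF n_nat] by blast
  obtain Cs where Cs: "Cs > 0" "\<And>k. Cs * fact k / 2 ^ k \<le> \<bar>pochhammer (s + 1) k\<bar>" using poch_lower[OF s1_nat] by blast
  have s0: "s \<noteq> 0" using s_nat[rule_format, of 0] by simp
  define E1 where "E1 = (\<bar>2 * s\<bar> + 1) ^ 2"
  define D where "D = (1 + \<bar>s\<bar>) / \<bar>s\<bar>"
  define K where "K = D / (Cm * Cn * Cs * Cs)"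
  define A where "A = E1 * 4 * 3 * 3 * 4 * 4 / 16 * \<bar>x\<bar> ^ 2"
  define B where "B = 3 * 2 / 4 * \<bar>x\<bar>"
  have ratio: "\<bar>pochhammer (1/2) k / pochhammer a k\<bar> \<le> 3 ^ k / C"
    if C: "C > 0" "\<And>k. C * fact k / 2 ^ k \<le> \<bar>pochhammer a k\<bar>" for a C :: real and k
  proof -
    have u: "\<bar>pochhammer (1/2::real) k\<bar> \<le> (3/2) ^ k * fact k"
      using poch_upper[of "1/2" k] by simp
    have l: "0 < C * fact k / 2 ^ k" using C by simp
    have "\<bar>pochhammer (1/2) k / pochhammer a k\<bar> = \<bar>pochhammer (1/2::real) k\<bar> / \<bar>pochhammer a k\<bar>"
      by (simp add: abs_divide)
    also have "\<dots> \<le> ((3/2) ^ k * fact k) / (C * fact k / 2 ^ k)"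
      by (rule frac_le[OF _ u l C(2)]) simp
    also have "\<dots> = 3 ^ k / C" using C by (simp add: field_simps power_divide)
    finally show ?thesis .
  qed
  have inv: "\<bar>1 / pochhammer (s + 1) k\<bar> \<le> 2 ^ k / (Cs * fact k)" for k
  proof -
    have l: "0 < Cs * fact k / 2 ^ k" using Cs by simp
    have "\<bar>1 / pochhammer (s + 1) k\<bar> = 1 / \<bar>pochhammer (s + 1) k\<bar>" by (simp add: abs_divide)
    also have "\<dots> \<le> 1 / (Cs * fact k / 2 ^ k)"
      by (rule frac_le[OF _ _ l Cs(2)]) auto
    also have "\<dots> = 2 ^ k / (Cs * fact k)" by simp
    finally show ?thesis .
  qed
  have main: "\<bar>ccf s \<mu> \<nu> L m n * x ^ (2 * L + m + n)\<bar> \<le> K * (A ^ L / fact L) * (B ^ m / fact m) * (B ^ n / fact n)" for L m n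
  proof -
    have b1: "\<bar>pochhammer (2 * s) (2 * L) / fact (2 * L)\<bar> \<le> E1 ^ L"
    proof -
      have "\<bar>pochhammer (2 * s) (2 * L) / fact (2 * L)\<bar> = \<bar>pochhammer (2 * s) (2 * L)\<bar> / fact (2 * L)"
        by (simp add: abs_divide)
      also have "\<dots> \<le> ((\<bar>2 * s\<bar> + 1) ^ (2 * L) * fact (2 * L)) / fact (2 * L)"
        by (rule divide_right_mono[OF poch_upper]) simp
      also have "\<dots> = E1 ^ L" unfolding E1_def by (simp add: power_mult)
      finally show ?thesis .
    qed
    have b2: "\<bar>(2 * real L + s) / s\<bar> \<le> D * 4 ^ L"
    proof -
      have "\<bar>2 * real L + s\<bar> \<le> 2 * real L + \<bar>s\<bar>" by simp
      also have "\<dots> \<le> (1 + \<bar>s\<bar>) * (2 * real L + 1)" by (simp add: algebra_simps)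
      also have "\<dots> \<le> (1 + \<bar>s\<bar>) * 4 ^ L" by (rule mult_left_mono[OF two_L_le]) simp
      finally have "\<bar>2 * real L + s\<bar> \<le> (1 + \<bar>s\<bar>) * 4 ^ L" .
      then have "\<bar>2 * real L + s\<bar> / \<bar>s\<bar> \<le> (1 + \<bar>s\<bar>) * 4 ^ L / \<bar>s\<bar>"
        by (rule divide_right_mono) simp
      then show ?thesis unfolding D_def by (simp add: abs_divide)
    qed
    have b3: "\<bar>pochhammer (1/2) (L + m) / pochhammer (\<mu> + 1) (L + m)\<bar> \<le> 3 ^ L * 3 ^ m / Cm"
      using ratio[OF Cm, of "L + m"] by (simp add: power_add)
    have b4: "\<bar>pochhammer (1/2) (L + n) / pochhammer (\<nu> + 1) (L + n)\<bar> \<le> 3 ^ L * 3 ^ n / Cn"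
      using ratio[OF Cn, of "L + n"] by (simp add: power_add)
    have b5: "\<bar>1 / pochhammer (s + 1) (2 * L + m)\<bar> \<le> 4 ^ L * 2 ^ m / (Cs * fact L)"
    proof -
      have "\<bar>1 / pochhammer (s + 1) (2 * L + m)\<bar> \<le> 2 ^ (2 * L + m) / (Cs * fact (2 * L + m))" by (rule inv)
      also have "\<dots> \<le> 2 ^ (2 * L + m) / (Cs * fact L)"
        by (rule divide_left_mono) (use Cs in \<open>auto intro!: mult_left_mono fact_mono\<close>)
      also have "\<dots> = 4 ^ L * 2 ^ m / (Cs * fact L)" by (simp add: power_add power_mult)
      finally show ?thesis .
    qed
    have b6: "\<bar>1 / pochhammer (s + 1) (2 * L + n)\<bar> \<le> 4 ^ L * 2 ^ n / Cs"
    proof -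
      have "\<bar>1 / pochhammer (s + 1) (2 * L + n)\<bar> \<le> 2 ^ (2 * L + n) / (Cs * fact (2 * L + n))" by (rule inv)
      also have "\<dots> \<le> 2 ^ (2 * L + n) / (Cs * 1)"
        by (rule divide_left_mono) (use Cs in \<open>auto intro!: mult_left_mono\<close>)
      also have "\<dots> = 4 ^ L * 2 ^ n / Cs" by (simp add: power_add power_mult)
      finally show ?thesis .
    qed
    have b7: "\<bar>1 / (4 ^ (2 * L + m + n) * fact m * fact n) * x ^ (2 * L + m + n)\<bar>
        = (\<bar>x\<bar> ^ 2) ^ L * \<bar>x\<bar> ^ m * \<bar>x\<bar> ^ n / (16 ^ L * 4 ^ m * 4 ^ n * fact m * fact n)"
      by (simp add: abs_mult abs_divide power_abs power_add power_mult)
    have "\<bar>ccf s \<mu> \<nu> L m n * x ^ (2 * L + m + n)\<bar>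
      = \<bar>pochhammer (2 * s) (2 * L) / fact (2 * L)\<bar> * \<bar>(2 * real L + s) / s\<bar>
        * \<bar>pochhammer (1/2) (L + m) / pochhammer (\<mu> + 1) (L + m)\<bar>
        * \<bar>pochhammer (1/2) (L + n) / pochhammer (\<nu> + 1) (L + n)\<bar>
        * \<bar>1 / pochhammer (s + 1) (2 * L + m)\<bar> * \<bar>1 / pochhammer (s + 1) (2 * L + n)\<bar>
        * \<bar>1 / (4 ^ (2 * L + m + n) * fact m * fact n) * x ^ (2 * L + m + n)\<bar>"
      unfolding ccf_def by (simp only: abs_mult mult.assoc)
    also have "\<dots> \<le> E1 ^ L * (D * 4 ^ L) * (3 ^ L * 3 ^ m / Cm) * (3 ^ L * 3 ^ n / Cn)
        * (4 ^ L * 2 ^ m / (Cs * fact L)) * (4 ^ L * 2 ^ n / Cs)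
        * ((\<bar>x\<bar> ^ 2) ^ L * \<bar>x\<bar> ^ m * \<bar>x\<bar> ^ n / (16 ^ L * 4 ^ m * 4 ^ n * fact m * fact n))"
      unfolding b7
      by (intro mult_mono b1 b2 b3 b4 b5 b6 order_refl) (auto simp: D_def E1_def intro!: mult_nonneg_nonneg divide_nonneg_nonneg less_imp_le[OF Cm(1)] less_imp_le[OF Cn(1)] less_imp_le[OF Cs(1)])
    also have "\<dots> = K * (A ^ L / fact L) * (B ^ m / fact m) * (B ^ n / fact n)"
    proof -
      have NP: "(2::real) ^ m * 2 ^ m * 2 ^ n * 2 ^ n * 3 ^ L * 3 ^ L * 4 ^ L * 4 ^ L * 4 ^ L = 4 ^ m * 4 ^ n * 16 ^ L * 36 ^ L"
      proof -
        have "(2::real) ^ m * 2 ^ m = 4 ^ m" by (simp add: power_mult_distrib[symmetric])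
        moreover have "(2::real) ^ n * 2 ^ n = 4 ^ n" by (simp add: power_mult_distrib[symmetric])
        moreover have "(3::real) ^ L * 3 ^ L * 4 ^ L * 4 ^ L * 4 ^ L = 16 ^ L * 36 ^ L"
          by (simp add: power_mult_distrib[symmetric])
        ultimately show ?thesis by (simp add: ac_simps)
      qed
      show ?thesis
        unfolding K_def A_def B_def using Cm Cn Cs NP
        by (simp add: power_mult_distrib power_divide field_simps)
    qed
    finally show ?thesis .
  qed
  then show ?thesis by blast
qed

lemma pair_has_sum:
  fixes v :: "nat \<Rightarrow> real"
  assumes v: "(v has_sum V) UNIV" and vnn: "\<And>n. v n \<ge> 0" and a: "a \<ge> 0"
  shows "((\<lambda>q::nat\<times>nat. a * v (fst q) * v (snd q)) has_sum (a * V * V)) UNIV"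
proof -
  have inner: "((\<lambda>n. (\<lambda>q::nat\<times>nat. a * v (fst q) * v (snd q)) (m, n)) has_sum (a * v m * V)) UNIV" for m
    using has_sum_cmult_right[OF v, of "a * v m"] by simp
  have outer: "((\<lambda>m. a * v m * V) has_sum (a * V * V)) UNIV"
    using has_sum_cmult_left[OF has_sum_cmult_right[OF v, of a], of V] by simp
  have summ: "(\<lambda>q::nat\<times>nat. a * v (fst q) * v (snd q)) summable_on (Sigma UNIV (\<lambda>_. UNIV))"
    by (rule summable_on_SigmaI[OF inner]) (use outer vnn a in \<open>auto intro: has_sum_imp_summable\<close>)
  have "((\<lambda>q::nat\<times>nat. a * v (fst q) * v (snd q)) has_sum (a * V * V)) (Sigma UNIV (\<lambda>_. UNIV))"
    by (rule has_sum_SigmaI[OF inner outer summ])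
  then show ?thesis by simp
qed

lemma triple_summable:
  fixes u v :: "nat \<Rightarrow> real"
  assumes u: "(u has_sum U) UNIV" and v: "(v has_sum V) UNIV" and unn: "\<And>n. u n \<ge> 0" and vnn: "\<And>n. v n \<ge> 0"
    and c: "c \<ge> 0"
  shows "(\<lambda>p::nat\<times>nat\<times>nat. c * u (fst p) * v (fst (snd p)) * v (snd (snd p))) summable_on UNIV"
proof -
  have inner: "((\<lambda>q. (\<lambda>p::nat\<times>nat\<times>nat. c * u (fst p) * v (fst (snd p)) * v (snd (snd p))) (L, q)) has_sum (c * u L * V * V)) UNIV" for L
    using pair_has_sum[OF v vnn, of "c * u L"] c unn by simp
  have outer: "((\<lambda>L. c * u L * V * V) has_sum (c * U * V * V)) UNIV"
    using has_sum_cmult_left[OF has_sum_cmult_left[OF has_sum_cmult_right[OF u, of c], of V], of V] by simp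
  have "(\<lambda>p::nat\<times>nat\<times>nat. c * u (fst p) * v (fst (snd p)) * v (snd (snd p))) summable_on (Sigma UNIV (\<lambda>_. UNIV))"
    by (rule summable_on_SigmaI[OF inner]) (use outer unn vnn c in \<open>auto intro: has_sum_imp_summable\<close>)
  then show ?thesis by simp
qed

lemma exp_has_sum: "((\<lambda>n. \<bar>a\<bar> ^ n / fact n) has_sum exp \<bar>a::real\<bar>) UNIV"
proof (rule sums_nonneg_imp_has_sum)
  show "(\<lambda>n. \<bar>a\<bar> ^ n / fact n) sums exp \<bar>a\<bar>"
    using exp_converges[of "\<bar>a\<bar>"] by (simp add: divide_inverse mult.commute)
qed simp

lemma hyp12: "hypergeomF [a] [b1, b2] z = suminf (\<lambda>n. pochhammer a n / (pochhammer b1 n * pochhammer b2 n) * z ^ n / fact n)"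
  by (simp add: hypergeomF_def)

lemma hyp23: "hypergeomF [a1, a2] [b1, b2, b3] z = suminf (\<lambda>n. pochhammer a1 n * pochhammer a2 n / (pochhammer b1 n * (pochhammer b2 n * pochhammer b3 n)) * z ^ n / fact n)"
  by (simp add: hypergeomF_def)

lemma F12_has_sum:
  fixes a b1 b2 z :: real
  assumes b1: "\<forall>k::nat. b1 \<noteq> - real k" and b2: "\<forall>k::nat. b2 \<noteq> - real k"
  shows "((\<lambda>n. pochhammer a n / (pochhammer b1 n * pochhammer b2 n) * z ^ n / fact n) has_sum hypergeomF [a] [b1, b2] z) UNIV"
proof -
  have ns: "summable (\<lambda>n. norm (pochhammer a n / (pochhammer b1 n * pochhammer b2 n) * z ^ n / fact n))"
    using summable_F12[OF b1 b2, of a z] by simp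
  then have "summable (\<lambda>n. pochhammer a n / (pochhammer b1 n * pochhammer b2 n) * z ^ n / fact n)"
    by (rule summable_norm_cancel)
  then have "(\<lambda>n. pochhammer a n / (pochhammer b1 n * pochhammer b2 n) * z ^ n / fact n) sums hypergeomF [a] [b1, b2] z"
    unfolding hyp12 by (rule summable_sums)
  then show ?thesis by (rule norm_summable_imp_has_sum[OF ns])
qed


theorem mainTheorem7:
  fixes k \<mu> \<nu> :: real
  assumes "\<mu> + 1 \<notin> \<int>\<^sub>\<le>\<^sub>0" and "\<nu> + 1 \<notin> \<int>\<^sub>\<le>\<^sub>0" and "\<mu> + \<nu> \<notin> \<int>\<^sub>\<le>\<^sub>0"
  shows "hypergeomF [1/2, \<mu>/2 + \<nu>/2 + 1/2] [\<mu> + 1, \<nu> + 1, \<mu> + \<nu> + 1] (- (k ^ 2)) =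
    (2 powr (\<mu> + \<nu>) * Gamma (\<mu> + 1) * Gamma (\<nu> + 1) * Gamma (\<mu>/2 + \<nu>/2 + 1))
      / (sqrt pi * Gamma (\<mu>/2 + \<nu>/2) ^ 2 * Gamma (\<mu>/2 + \<nu>/2 + 1/2))
    * (\<Sum>L. ((-1) ^ (2 * L) * k ^ (4 * L)
              * 2 powr (4 * real L - 2 * (\<mu>/2 + \<nu>/2) - \<mu> - \<nu> + 1)
              * (pochhammer (\<mu>/2 + \<nu>/2 + 1/2) (2 * L)) ^ 2
              * Gamma (2 * real L + \<mu> + \<nu>))
           / (fact (2 * L) * gpoch (real L + 1/2) (\<mu> + 1/2) * gpoch (real L + 1/2) (\<nu> + 1/2)
              * (2 * real L + \<mu>/2 + \<nu>/2) * (pochhammer (\<mu> + \<nu>) (2 * L)) ^ 2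
              * (pochhammer (2 * real L + \<mu> + \<nu>) (2 * L)) ^ 2)
           * hypergeomF [real L + 1/2] [real L + \<mu> + 1, 2 * real L + \<mu>/2 + \<nu>/2 + 1] (- (k ^ 2) / 4)
           * hypergeomF [real L + 1/2] [2 * real L + \<mu>/2 + \<nu>/2 + 1, real L + \<nu> + 1] (- (k ^ 2) / 4))"
  (is "?LHS = ?Pref * (\<Sum>L. ?T L)")
proof -
  note h1 = assms(1) and h2 = assms(2) and h3 = assms(3)
  define s where "s = \<mu>/2 + \<nu>/2"
  have sh: "\<mu> + \<nu> = 2 * s" unfolding s_def by simp
  have s_nat: "\<forall>j::nat. s \<noteq> - real j"
  proof
    fix j :: nat show "s \<noteq> - real j"
    proof
      assume "s = - real j"
      then have "\<mu> + \<nu> = - real (2 * j)" using sh by simp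
      then show False using h3 minus_of_nat_in_nonpos_Ints by metis
    qed
  qed
  have m_nat: "\<forall>j::nat. \<mu> + 1 \<noteq> - real j" using h1 by auto
  have n_nat: "\<forall>j::nat. \<nu> + 1 \<noteq> - real j" using h2 by auto
  define x where "x = - (k ^ 2)"
  define g where "g = (\<lambda>p::nat\<times>nat\<times>nat. ccf s \<mu> \<nu> (fst p) (fst (snd p)) (snd (snd p))
                          * x ^ (2 * fst p + fst (snd p) + snd (snd p)))"
  \<comment> \<open>Step 1: absolute summability of the triple series\<close>
  obtain K A B where KAB: "\<And>L m n. \<bar>ccf s \<mu> \<nu> L m n * x ^ (2 * L + m + n)\<bar>
      \<le> K * (A ^ L / fact L) * (B ^ m / fact m) * (B ^ n / fact n)"
    using ccf_bound[OF s_nat m_nat n_nat, of x] by blast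
  have bsum: "(\<lambda>p::nat\<times>nat\<times>nat. \<bar>K\<bar> * (\<bar>A\<bar> ^ fst p / fact (fst p)) * (\<bar>B\<bar> ^ fst (snd p) / fact (fst (snd p)))
      * (\<bar>B\<bar> ^ snd (snd p) / fact (snd (snd p)))) summable_on UNIV"
    by (rule triple_summable[OF exp_has_sum exp_has_sum]) auto
  have gabs: "(\<lambda>p. norm (g p)) summable_on UNIV"
  proof (rule Infinite_Sum.abs_summable_on_comparison_test[OF bsum[THEN Infinite_Sum.summable_on_iff_abs_summable_on_real[THEN iffD1]]])
    fix p :: "nat\<times>nat\<times>nat"
    obtain L m n where p: "p = (L, m, n)" by (cases p) auto
    have "\<bar>g p\<bar> \<le> K * (A ^ L / fact L) * (B ^ m / fact m) * (B ^ n / fact n)"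
      unfolding g_def p using KAB by simp
    also have "\<dots> \<le> \<bar>K * (A ^ L / fact L) * (B ^ m / fact m) * (B ^ n / fact n)\<bar>" by (rule abs_ge_self)
    also have "\<dots> = \<bar>K\<bar> * (\<bar>A\<bar> ^ L / fact L) * (\<bar>B\<bar> ^ m / fact m) * (\<bar>B\<bar> ^ n / fact n)"
      by (simp add: abs_mult abs_divide power_abs)
    finally show "norm (g p) \<le> norm (\<bar>K\<bar> * (\<bar>A\<bar> ^ fst p / fact (fst p)) * (\<bar>B\<bar> ^ fst (snd p) / fact (fst (snd p)))
      * (\<bar>B\<bar> ^ snd (snd p) / fact (snd (snd p))))"
      unfolding p by simp
  qed
  have gsum: "g summable_on UNIV" by (rule Infinite_Sum.abs_summable_summable[OF gabs])
  define S where "S = infsum g UNIV"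
  have gS: "(g has_sum S) UNIV" unfolding S_def using gsum by simp
  have Lsum: "((\<lambda>q. g (L, q)) has_sum (?Pref * ?T L)) UNIV" for L
  proof -
    define z where "z = - (k ^ 2) / 4"
    have zx: "z = x / 4" unfolding z_def x_def ..
    define a1 where "a1 = (\<lambda>m. pochhammer (real L + 1/2) m / (pochhammer (real L + \<mu> + 1) m
        * pochhammer (2 * real L + \<mu>/2 + \<nu>/2 + 1) m) * z ^ m / fact m)"
    define a2 where "a2 = (\<lambda>n. pochhammer (real L + 1/2) n / (pochhammer (2 * real L + \<mu>/2 + \<nu>/2 + 1) n
        * pochhammer (real L + \<nu> + 1) n) * z ^ n / fact n)"
    define H1 where "H1 = hypergeomF [real L + 1/2] [real L + \<mu> + 1, 2 * real L + \<mu>/2 + \<nu>/2 + 1] z"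
    define H2 where "H2 = hypergeomF [real L + 1/2] [2 * real L + \<mu>/2 + \<nu>/2 + 1, real L + \<nu> + 1] z"
    define w where "w = (\<mu>/2 + \<nu>/2) * pochhammer (\<mu> + \<nu>) (2 * L) * pochhammer (1/2) L ^ 2
      / (16 ^ L * fact (2 * L) * pochhammer (\<mu> + 1) L * pochhammer (\<nu> + 1) L
         * (2 * real L + \<mu>/2 + \<nu>/2) * pochhammer (\<mu>/2 + \<nu>/2) (2 * L) ^ 2) * x ^ (2 * L)"
    have bL1: "\<forall>j::nat. real L + \<mu> + 1 \<noteq> - real j"
    proof
      fix j :: nat
      have "\<mu> + 1 \<noteq> - real (j + L)" using m_nat by blast
      then show "real L + \<mu> + 1 \<noteq> - real j" by simp
    qed
    have bL3: "\<forall>j::nat. real L + \<nu> + 1 \<noteq> - real j"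
    proof
      fix j :: nat
      have "\<nu> + 1 \<noteq> - real (j + L)" using n_nat by blast
      then show "real L + \<nu> + 1 \<noteq> - real j" by simp
    qed
    have bL2: "\<forall>j::nat. 2 * real L + \<mu>/2 + \<nu>/2 + 1 \<noteq> - real j"
    proof
      fix j :: nat
      have "s \<noteq> - real (j + 2 * L + 1)" using s_nat by blast
      then show "2 * real L + \<mu>/2 + \<nu>/2 + 1 \<noteq> - real j" unfolding s_def by simp
    qed
    have a1s: "(a1 has_sum H1) UNIV" unfolding a1_def H1_def by (rule F12_has_sum[OF bL1 bL2])
    have a2s: "(a2 has_sum H2) UNIV" unfolding a2_def H2_def by (rule F12_has_sum[OF bL2 bL3])
    have gq: "g (L, (m, n)) = w * a1 m * a2 n" for m n
      using term_id[OF h1 h2 h3, of L x m n] unfolding g_def w_def a1_def a2_def zx s_def by simp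
    have inner: "((\<lambda>n. (\<lambda>q. g (L, q)) (m, n)) has_sum (w * a1 m * H2)) UNIV" for m
      unfolding gq by (rule has_sum_cmult_right[OF a2s])
    have outer: "((\<lambda>m. w * a1 m * H2) has_sum (w * H1 * H2)) UNIV"
      by (rule has_sum_cmult_left[OF has_sum_cmult_right[OF a1s]])
    have summ: "(\<lambda>q. g (L, q)) summable_on (Sigma UNIV (\<lambda>_. UNIV))"
    proof -
      have "g summable_on (Pair L ` UNIV)" by (rule summable_on_subset_banach[OF gsum]) simp
      moreover have "inj_on (Pair L) UNIV" by (simp add: inj_on_def)
      ultimately have "(g \<circ> Pair L) summable_on UNIV" using summable_on_reindex by blast
      then show ?thesis by (simp add: o_def)
    qed
    have "((\<lambda>q. g (L, q)) has_sum (w * H1 * H2)) (Sigma UNIV (\<lambda>_. UNIV))"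
      by (rule has_sum_SigmaI[OF inner outer summ])
    then have hs: "((\<lambda>q. g (L, q)) has_sum (w * H1 * H2)) UNIV" by simp
    have xk: "(-1) ^ (2 * L) * k ^ (4 * L) = x ^ (2 * L)"
    proof -
      have "x ^ (2 * L) = ((k ^ 2) ^ 2) ^ L" unfolding x_def by (simp add: power_mult)
      also have "\<dots> = k ^ (4 * L)" by (simp add: power_mult[symmetric])
      finally show ?thesis by simp
    qed
    have split: "\<And>a b c d e :: real. a * b * c * d / e = a * (b * c * d / e)" by simp
    have e: "\<And>P X W a b :: real. P * (X * W * a * b) = (P * W) * X * a * b" by (simp only: ac_simps)
    have "?Pref * ?T L = w * H1 * H2"
      unfolding xk unfolding split[of "x ^ (2 * L)"] z_def[symmetric] H1_def[symmetric] H2_def[symmetric] e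
      unfolding PW[OF h1 h2 h3, of L] unfolding w_def ..
    with hs show ?thesis by simp
  qed
  have gS': "(g has_sum S) (Sigma UNIV (\<lambda>_::nat. UNIV :: (nat\<times>nat) set))" using gS by simp
  have RS: "((\<lambda>L. ?Pref * ?T L) has_sum S) UNIV"
    by (rule has_sum_SigmaD[OF gS' Lsum])
  then have RS': "(\<lambda>L. ?Pref * ?T L) sums S" by (rule has_sum_imp_sums)
  have RHS: "?Pref * (\<Sum>L. ?T L) = S"
  proof (cases "?Pref = 0")
    case True
    have z: "(\<lambda>L. ?Pref * ?T L) = (\<lambda>L. 0)" by (simp only: True mult_zero_left)
    have "(\<lambda>L. 0::real) sums S" using RS' unfolding z .
    then have "S = 0" using sums_zero sums_unique2 by blast
    then show ?thesis by (simp only: True mult_zero_left)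
  next
    case False
    have "(\<lambda>L. ?Pref * ?T L / ?Pref) sums (S / ?Pref)" by (rule sums_divide[OF RS'])
    moreover have "(\<lambda>L. ?Pref * ?T L / ?Pref) = ?T"
      by (rule ext) (rule nonzero_mult_div_cancel_left[OF False])
    ultimately have "?T sums (S / ?Pref)" by simp
    then have "(\<Sum>L. ?T L) = S / ?Pref" by (rule sums_unique[symmetric])
    then show ?thesis by (simp only: times_divide_eq_right nonzero_mult_div_cancel_left[OF False])
  qed
  \<comment> \<open>Step 4: grouping by total degree\<close>
  define fib where "fib = (\<lambda>N. {p::nat\<times>nat\<times>nat. 2 * fst p + fst (snd p) + snd (snd p) = N})"
  have fin: "finite (fib N)" for N
  proof (rule finite_subset)
    show "fib N \<subseteq> {..N} \<times> {..N} \<times> {..N}" unfolding fib_def by auto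
  qed simp
  have gS2: "((\<lambda>q. g (snd q)) has_sum S) (Sigma UNIV fib)"
  proof -
    have "(g has_sum S) UNIV = ((\<lambda>q. g (snd q)) has_sum S) (Sigma UNIV fib)"
      by (rule has_sum_reindex_bij_witness[where j = "\<lambda>p. (2 * fst p + fst (snd p) + snd (snd p), p)" and i = snd])
         (auto simp: fib_def)
    then show ?thesis using gS by simp
  qed
  have FS: "((\<lambda>N. sum g (fib N)) has_sum S) UNIV"
    by (rule has_sum_SigmaD[OF gS2]) (simp add: fin)
  have fibval: "sum g (fib N) = pochhammer (1/2) N * pochhammer (\<mu>/2 + \<nu>/2 + 1/2) N
        / (pochhammer (\<mu> + 1) N * (pochhammer (\<nu> + 1) N * pochhammer (\<mu> + \<nu> + 1) N)) * x ^ N / fact N" for N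
  proof -
    have "sum g (fib N) = (\<Sum>p\<in>fib N. ccf s \<mu> \<nu> (fst p) (fst (snd p)) (snd (snd p)) * x ^ N)"
      by (rule sum.cong) (auto simp: g_def fib_def)
    also have "\<dots> = (\<Sum>p\<in>fib N. ccf s \<mu> \<nu> (fst p) (fst (snd p)) (snd (snd p))) * x ^ N"
      by (simp add: sum_distrib_right)
    also have "(\<Sum>p\<in>fib N. ccf s \<mu> \<nu> (fst p) (fst (snd p)) (snd (snd p))) =
       pochhammer (1/2) N * pochhammer (\<mu>/2 + \<nu>/2 + 1/2) N
        / (pochhammer (\<mu> + 1) N * pochhammer (\<nu> + 1) N * pochhammer (\<mu> + \<nu> + 1) N) / fact N"
      unfolding fib_def s_def by (rule fiber_sum[OF h1 h2 h3])
    finally show ?thesis by (simp add: ac_simps)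
  qed
  have "(\<lambda>N. pochhammer (1/2) N * pochhammer (\<mu>/2 + \<nu>/2 + 1/2) N
        / (pochhammer (\<mu> + 1) N * (pochhammer (\<nu> + 1) N * pochhammer (\<mu> + \<nu> + 1) N)) * x ^ N / fact N) sums S"
    using has_sum_imp_sums[OF FS] unfolding fibval .
  then have LHS: "?LHS = S" unfolding hyp23 x_def[symmetric] by (rule sums_unique[symmetric])
  show ?thesis using LHS RHS by simp
qed

end
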